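(* Fix $k\in\mathbb{Z}_{\geq 1}$ and a set of patterns $B\subseteq\mathcal S$ such that $\mathrm{Av}(B)$ is nonempty and closed under $\oplus$ or closed under $\ominus$. Then the overlap graph $\mathcal{O}v(k,\mathrm{Av}(B))$ is strongly connected and its cycle polytope satisfies $\dim P(\mathcal{O}v(k,\mathrm{Av}(B)))=|\mathrm{Av}_k(B)|-|\mathrm{Av}_{k-1}(B)|$. In particular this holds for $B=\{\tau\}$, for any single pattern $\tau\in\mathcal S$.
   Context: For $n\ge1$, $\mathcal S_n$ is the set of permutations of $[n]$ in one-line notation, $\mathcal S=\bigcup_{n\ge1}\mathcal S_n$; by convention $\mathrm{Av}_0(B)$ consists of the empty permutation. For distinct reals $x_1,\dots,x_m$, $\mathrm{std}(x_1,\dots,x_m)$ is the unique $\pi\in\mathcal S_m$ with $\pi(i)<\pi(j)\iff x_i<x_j$; for $I=\{i_1<\dots<i_m\}$, $\mathrm{pat}_I(\sigma)=\mathrm{std}(\sigma(i_1),\dots,\sigma(i_m))$. $\sigma$ avoids $\pi$ if no $I$ has $\mathrm{pat}_I(\sigma)=\pi$. $\mathrm{Av}_n(B)$ is the set of permutations of size $n$ avoiding every element of $B$, $\mathrm{Av}(B)=\bigcup_{n\ge1}\mathrm{Av}_n(B)$. Overlap graph: $\mathcal{O}v(k,\mathrm{Av}(B))$ is the directed multigraph with vertex set $\mathrm{Av}_{k-1}(B)$ and, for each $\pi\in\mathrm{Av}_k(B)$, one edge labelled $\pi$ from $\mathrm{pat}_{\{1,\dots,k-1\}}(\pi)$ to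 $\mathrm{pat}_{\{2,\dots,k\}}(\pi)$. A simple cycle is a closed walk with distinct edges and distinct vertices; for a nonempty cycle $\mathcal C$, $\vec e_{\mathcal C}\in\mathbb R^{E}$ has $e$-coordinate (number of occurrences of $e$ in $\mathcal C$)$/|\mathcal C|$; the cycle polytope is $P(G)=\mathrm{conv}\{\vec e_{\mathcal C}:\mathcal C\text{ simple cycle of }G\}$. Direct sum $\tau\oplus\sigma=\tau(1)\cdots\tau(m)(\sigma(1)+m)\cdots(\sigma(n)+m)$ for $\tau\in\mathcal S_m,\sigma\in\mathcal S_n$; skew sum $\tau\ominus\sigma=(\tau(1)+n)\cdots(\tau(m)+n)\sigma(1)\cdots\sigma(n)$. Dimension of a polytope means dimension of its affine hull. *)

theory Defs
  imports "HOL-Analysis.Analysis" "HOL-Library.Function_Algebras"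
begin

instantiation "fun" :: (type, real_vector) real_vector
begin
definition scaleR_fun :: "real \<Rightarrow> ('a \<Rightarrow> 'b) \<Rightarrow> 'a \<Rightarrow> 'b"
  where "scaleR_fun c f = (\<lambda>x. c *\<^sub>R f x)"
instance
  by standard (auto simp: scaleR_fun_def fun_eq_iff plus_fun_def scaleR_add_right scaleR_add_left)
end

definition affdim :: "'a::real_vector set \<Rightarrow> int" where
  "affdim S = (if S = {} then -1
     else int (dim {x - y | x y. x \<in> affine hull S \<and> y \<in> affine hull S}))"

definition is_perm :: "nat list \<Rightarrow> bool" where
  "is_perm p \<longleftrightarrow> set p = {1..length p}"

definition allPerms :: "nat list set" where
  "allPerms = {p. is_perm p \<and> length p \<ge> 1}"

definition std :: "nat list \<Rightarrow> nat list" where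
  "std xs = map (\<lambda>x. card {y \<in> set xs. y \<le> x}) xs"

text \<open>pat_I(sigma); positions are 0-based here (I = set of indices into the list).\<close>
definition pat :: "nat set \<Rightarrow> nat list \<Rightarrow> nat list" where
  "pat I \<sigma> = std (nths \<sigma> I)"

definition contains :: "nat list \<Rightarrow> nat list \<Rightarrow> bool" where
  "contains \<sigma> \<pi> \<longleftrightarrow> (\<exists>I. I \<subseteq> {..<length \<sigma>} \<and> pat I \<sigma> = \<pi>)"

definition avoids :: "nat list \<Rightarrow> nat list \<Rightarrow> bool" where
  "avoids \<sigma> \<pi> \<longleftrightarrow> \<not> contains \<sigma> \<pi>"

text \<open>Av_n(B); for n = 0 this is the set containing only the empty permutation.\<close>
definition Av_n :: "nat \<Rightarrow> nat list set \<Rightarrow> nat list set" where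
  "Av_n n B = {\<sigma>. is_perm \<sigma> \<and> length \<sigma> = n \<and> (\<forall>\<pi>\<in>B. avoids \<sigma> \<pi>)}"

definition Av :: "nat list set \<Rightarrow> nat list set" where
  "Av B = (\<Union>n\<in>{1..}. Av_n n B)"

definition perm_dsum :: "nat list \<Rightarrow> nat list \<Rightarrow> nat list" where
  "perm_dsum \<tau> \<sigma> = \<tau> @ map (\<lambda>x. x + length \<tau>) \<sigma>"

definition perm_ssum :: "nat list \<Rightarrow> nat list \<Rightarrow> nat list" where
  "perm_ssum \<tau> \<sigma> = map (\<lambda>x. x + length \<sigma>) \<tau> @ \<sigma>"

definition closed_under :: "(nat list \<Rightarrow> nat list \<Rightarrow> nat list) \<Rightarrow> nat list set \<Rightarrow> bool" where
  "closed_under f C \<longleftrightarrow> (\<forall>\<tau>\<in>C. \<forall>\<sigma>\<in>C. f \<tau> \<sigma> \<in> C)"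

definition strongly_connected ::
  "'v set \<Rightarrow> 'e set \<Rightarrow> ('e \<Rightarrow> 'v) \<Rightarrow> ('e \<Rightarrow> 'v) \<Rightarrow> bool" where
  "strongly_connected V E s t \<longleftrightarrow>
     (\<forall>u\<in>V. \<forall>v\<in>V. (u, v) \<in> {(s e, t e) | e. e \<in> E}\<^sup>*)"

definition simple_cycle ::
  "'v set \<Rightarrow> 'e set \<Rightarrow> ('e \<Rightarrow> 'v) \<Rightarrow> ('e \<Rightarrow> 'v) \<Rightarrow> 'e list \<Rightarrow> bool" where
  "simple_cycle V E s t C \<longleftrightarrow> C \<noteq> [] \<and> set C \<subseteq> E \<and> set (map s C) \<subseteq> V \<and>
     distinct C \<and> distinct (map s C) \<and>
     (\<forall>i<length C. t (C ! i) = s (C ! ((i + 1) mod length C)))"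

text \<open>The vector e_C in R^E (coordinates outside E are 0).\<close>
definition cycle_vec :: "'e list \<Rightarrow> 'e \<Rightarrow> real" where
  "cycle_vec C = (\<lambda>e. real (count_list C e) / real (length C))"

definition cycle_polytope ::
  "'v set \<Rightarrow> 'e set \<Rightarrow> ('e \<Rightarrow> 'v) \<Rightarrow> ('e \<Rightarrow> 'v) \<Rightarrow> ('e \<Rightarrow> real) set" where
  "cycle_polytope V E s t = convex hull {cycle_vec C | C. simple_cycle V E s t C}"

definition ov_V :: "nat \<Rightarrow> nat list set \<Rightarrow> nat list set" where
  "ov_V k B = Av_n (k - 1) B"

definition ov_E :: "nat \<Rightarrow> nat list set \<Rightarrow> nat list set" where
  "ov_E k B = Av_n k B"

text \<open>Edge pi goes from pat_{1..k-1}(pi) to pat_{2..k}(pi) (1-based positions).\<close>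
definition ov_src :: "nat \<Rightarrow> nat list \<Rightarrow> nat list" where
  "ov_src k \<pi> = pat {0..<k - 1} \<pi>"

definition ov_tgt :: "nat \<Rightarrow> nat list \<Rightarrow> nat list" where
  "ov_tgt k \<pi> = pat {1..<k} \<pi>"

end

theory Submission
  imports Defs
begin

definition rk :: "nat list \<Rightarrow> nat \<Rightarrow> nat" where "rk xs x = card {y \<in> set xs. y \<le> x}"

lemma std_rk: "std xs = map (rk xs) xs" by (simp add: std_def rk_def)

lemma rk_strict: "x \<in> set xs \<Longrightarrow> y \<in> set xs \<Longrightarrow> x < y \<Longrightarrow> rk xs x < rk xs y"
proof -
  assume a: "x \<in> set xs" "y \<in> set xs" "x < y"
  have "{z \<in> set xs. z \<le> x} \<subset> {z \<in> set xs. z \<le> y}"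
  proof (rule psubsetI)
    show "{z \<in> set xs. z \<le> x} \<subseteq> {z \<in> set xs. z \<le> y}" using a by auto
    have "y \<in> {z \<in> set xs. z \<le> y}" "y \<notin> {z \<in> set xs. z \<le> x}" using a by auto
    then show "{z \<in> set xs. z \<le> x} \<noteq> {z \<in> set xs. z \<le> y}" by blast
  qed
  then show ?thesis unfolding rk_def by (rule psubset_card_mono[rotated]) simp
qed

lemma std_map_mono:
  assumes "\<forall>x\<in>set xs. \<forall>y\<in>set xs. x < y \<longrightarrow> f x < f y"
  shows "std (map f xs) = std xs"
proof -
  have inj: "inj_on f (set xs)"
  proof (rule inj_onI)
    fix x y assume "x \<in> set xs" "y \<in> set xs" "f x = f y"
    then show "x = y" using assms by (metis less_irrefl linorder_neqE_nat)
  qed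
  have le: "\<And>x y. x \<in> set xs \<Longrightarrow> y \<in> set xs \<Longrightarrow> f y \<le> f x \<longleftrightarrow> y \<le> x"
    using assms by (metis le_less not_le)
  have "\<And>x. x \<in> set xs \<Longrightarrow> {y \<in> f ` set xs. y \<le> f x} = f ` {y \<in> set xs. y \<le> x}"
    using le by auto
  then have "\<And>x. x \<in> set xs \<Longrightarrow> card {y \<in> f ` set xs. y \<le> f x} = card {y \<in> set xs. y \<le> x}"
    by (metis (no_types, lifting) card_image inj inj_on_subset mem_Collect_eq subsetI)
  then show ?thesis unfolding std_def by simp
qed

lemma std_map_rk: "set ys \<subseteq> set xs \<Longrightarrow> std (map (rk xs) ys) = std ys"
  by (rule std_map_mono) (use rk_strict in blast)

lemma std_take_drop_std: "std (take m (drop d (std ys))) = std (take m (drop d ys))"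
proof -
  have "take m (drop d (std ys)) = map (rk ys) (take m (drop d ys))"
    by (simp add: std_rk take_map drop_map)
  moreover have "set (take m (drop d ys)) \<subseteq> set ys"
    by (meson in_set_dropD in_set_takeD subsetI)
  ultimately show ?thesis using std_map_rk by simp
qed

lemma std_nths_std: "std (nths (std ys) I) = std (nths ys I)"
proof -
  have "nths (std ys) I = map (rk ys) (nths ys I)" by (simp add: std_rk nths_map)
  then show ?thesis using std_map_rk set_nths_subset by metis
qed

lemma pat_pat: "pat J (pat I \<sigma>) = pat {i \<in> I. \<exists>j\<in>J. card {i'\<in>I. i'<i} = j} \<sigma>"
  unfolding pat_def std_nths_std nths_nths ..

lemma contains_trans: "contains \<sigma> \<rho> \<Longrightarrow> contains \<rho> \<pi> \<Longrightarrow> contains \<sigma> \<pi>"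
  unfolding contains_def by (metis (no_types, lifting) mem_Collect_eq pat_pat subset_eq)

lemma avoids_pat: "avoids \<sigma> \<pi> \<Longrightarrow> I \<subseteq> {..<length \<sigma>} \<Longrightarrow> avoids (pat I \<sigma>) \<pi>"
  unfolding avoids_def using contains_trans contains_def by blast

lemma length_std[simp]: "length (std xs) = length xs" by (simp add: std_def)

lemma is_perm_std: assumes "distinct xs" shows "is_perm (std xs)"
proof -
  have inj: "inj_on (rk xs) (set xs)"
  proof (rule inj_onI)
    fix x y assume "x \<in> set xs" "y \<in> set xs" "rk xs x = rk xs y"
    then show "x = y" using rk_strict by (metis less_irrefl linorder_neqE_nat)
  qed
  have sub: "rk xs ` set xs \<subseteq> {1..card (set xs)}"
  proof
    fix z assume "z \<in> rk xs ` set xs"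
    then obtain x where x: "x \<in> set xs" "z = rk xs x" by auto
    have "x \<in> {y \<in> set xs. y \<le> x}" using x by auto
    then have "1 \<le> z" unfolding x rk_def
      by (metis (no_types, lifting) List.finite_set card_0_eq empty_iff finite_subset
          less_one mem_Collect_eq not_le subsetI)
    moreover have "z \<le> card (set xs)" unfolding x rk_def by (rule card_mono) auto
    ultimately show "z \<in> {1..card (set xs)}" by auto
  qed
  have "card (rk xs ` set xs) = card {1..card (set xs)}"
    using card_image[OF inj] by simp
  then have "rk xs ` set xs = {1..card (set xs)}"
    using card_subset_eq[OF _ sub] by simp
  then show ?thesis unfolding is_perm_def std_rk using distinct_card[OF assms] by simp
qed

lemma is_perm_distinct: "is_perm p \<Longrightarrow> distinct p"
  unfolding is_perm_def by (simp add: card_distinct)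

lemma std_perm: assumes "is_perm p" shows "std p = p"
proof -
  have "\<And>x. x \<in> set p \<Longrightarrow> rk p x = x"
  proof -
    fix x assume "x \<in> set p"
    then have "{y \<in> set p. y \<le> x} = {1..x}" using assms unfolding is_perm_def by auto
    then show "rk p x = x" unfolding rk_def by simp
  qed
  then show ?thesis unfolding std_rk by (simp add: map_idI)
qed

lemma std_shift: "std (map (\<lambda>x. x + c) xs) = std xs"
  by (rule std_map_mono) auto

lemma pat_interval: "pat {a..<b} \<sigma> = std (take (b - a) (drop a \<sigma>))"
proof -
  have "(+) a ` {..<b-a} = {a..<b}"
  proof (cases "a \<le> b")
    case True
    then show ?thesis using image_add_atLeastLessThan[of a 0 "b-a"] by (simp add: lessThan_atLeast0 add.commute)
  qed auto
  then have "nths \<sigma> {a..<b} = nths (drop a \<sigma>) {..<b-a}" using nths_drop[of a \<sigma> "{..<b-a}"] by simp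
  then show ?thesis unfolding pat_def by (simp only: nths_upt_eq_take)
qed


lemma Av_iff: "\<sigma> \<in> Av B \<longleftrightarrow> is_perm \<sigma> \<and> length \<sigma> \<ge> 1 \<and> (\<forall>\<pi>\<in>B. avoids \<sigma> \<pi>)"
  unfolding Av_def Av_n_def by auto

lemma Av_n_Av: "n \<ge> 1 \<Longrightarrow> Av_n n B \<subseteq> Av B"
  unfolding Av_def by auto

lemma pat_in_Av_n:
  assumes "is_perm \<sigma>" "\<forall>\<pi>\<in>B. avoids \<sigma> \<pi>" "I \<subseteq> {..<length \<sigma>}"
  shows "pat I \<sigma> \<in> Av_n (card I) B"
proof -
  have "is_perm (pat I \<sigma>)" unfolding pat_def
    by (rule is_perm_std) (simp add: is_perm_distinct assms(1))
  moreover have "length (pat I \<sigma>) = card I"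
  proof -
    have "{i. i < length \<sigma> \<and> i \<in> I} = I" using assms(3) by auto
    then show ?thesis unfolding pat_def by (simp add: length_nths)
  qed
  moreover have "\<forall>\<pi>\<in>B. avoids (pat I \<sigma>) \<pi>" using assms avoids_pat by blast
  ultimately show ?thesis unfolding Av_n_def by simp
qed

lemma window_in:
  assumes "is_perm \<sigma>" "\<forall>\<pi>\<in>B. avoids \<sigma> \<pi>" "i + m \<le> length \<sigma>"
  shows "pat {i..<i+m} \<sigma> \<in> Av_n m B"
proof -
  have "{i..<i+m} \<subseteq> {..<length \<sigma>}" using assms(3) by auto
  then show ?thesis using pat_in_Av_n[OF assms(1,2), of "{i..<i+m}"] by simp
qed

definition ovrel :: "nat \<Rightarrow> nat list set \<Rightarrow> (nat list \<times> nat list) set" where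
  "ovrel k B = {(ov_src k e, ov_tgt k e) | e. e \<in> ov_E k B}"

lemma src_window: "ov_src k (pat {i..<i+k} \<pi>) = pat {i..<i+(k-1)} \<pi>"
  unfolding ov_src_def pat_interval
  using std_take_drop_std[of "k-1" 0 "take k (drop i \<pi>)"] by simp

lemma tgt_window: "k \<ge> 1 \<Longrightarrow> ov_tgt k (pat {i..<i+k} \<pi>) = pat {i+1..<i+1+(k-1)} \<pi>"
  unfolding ov_tgt_def pat_interval
  using std_take_drop_std[of "k-1" 1 "take k (drop i \<pi>)"] by (simp add: drop_take)

lemma reach:
  assumes "k \<ge> 1" "is_perm \<pi>" "\<forall>p\<in>B. avoids \<pi> p"
  shows "j + (k-1) \<le> length \<pi> \<Longrightarrow> (pat {0..<k-1} \<pi>, pat {j..<j+(k-1)} \<pi>) \<in> (ovrel k B)\<^sup>*"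
proof (induction j)
  case 0 then show ?case by simp
next
  case (Suc j)
  have e: "pat {j..<j+k} \<pi> \<in> ov_E k B"
    unfolding ov_E_def using window_in[OF assms(2,3)] Suc.prems assms(1) by simp
  have "(ov_src k (pat {j..<j+k} \<pi>), ov_tgt k (pat {j..<j+k} \<pi>)) \<in> ovrel k B"
    unfolding ovrel_def using e by blast
  then have "(pat {j..<j+(k-1)} \<pi>, pat {Suc j..<Suc j+(k-1)} \<pi>) \<in> ovrel k B"
    using src_window[of k j \<pi>] tgt_window[OF assms(1), of j \<pi>] by simp
  moreover have "(pat {0..<k-1} \<pi>, pat {j..<j+(k-1)} \<pi>) \<in> (ovrel k B)\<^sup>*"
    using Suc by simp
  ultimately show ?case by (meson rtrancl.rtrancl_into_rtrancl)
qed

lemma pat_prefix: "is_perm \<sigma> \<Longrightarrow> pat {0..<length \<sigma>} (\<sigma> @ ys) = \<sigma>"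
  unfolding pat_interval by (simp add: std_perm)

lemma pat_suffix: "is_perm \<rho> \<Longrightarrow> length xs = m \<Longrightarrow> pat {m..<m+length \<rho>} (xs @ map (\<lambda>x. x + c) \<rho>) = \<rho>"
  unfolding pat_interval by (simp add: std_perm std_shift)

lemma pat_prefix2: "is_perm \<sigma> \<Longrightarrow> pat {0..<length \<sigma>} (map (\<lambda>x. x + c) \<sigma> @ ys) = \<sigma>"
  unfolding pat_interval by (simp add: std_perm std_shift)

lemma pat_suffix2: "is_perm \<rho> \<Longrightarrow> length xs = m \<Longrightarrow> pat {m..<m+length \<rho>} (xs @ \<rho>) = \<rho>"
  unfolding pat_interval by (simp add: std_perm)

lemma Av_n1: "\<sigma> \<in> Av_n 1 B \<Longrightarrow> \<sigma> = [1]"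
  unfolding Av_n_def is_perm_def by (cases \<sigma>) auto

lemma one_in_Av: assumes "Av B \<noteq> {}" shows "[1] \<in> Av B"
proof -
  obtain \<sigma> where s: "\<sigma> \<in> Av B" using assms by auto
  have "pat {0..<0+1} \<sigma> \<in> Av_n 1 B"
    by (rule window_in) (use s Av_iff in auto)
  then have "[1] \<in> Av_n 1 B" using Av_n1 by metis
  then show ?thesis using Av_n_Av by blast
qed

definition idp :: "nat \<Rightarrow> nat list" where "idp m = [1..<m+1]"
definition decp :: "nat \<Rightarrow> nat list" where "decp m = rev [1..<m+1]"

lemma idp_in: assumes "[1] \<in> Av B" "closed_under perm_dsum (Av B)"
  shows "m \<ge> 1 \<Longrightarrow> idp m \<in> Av B"
proof (induction m rule: nat_induct_at_least)
  case base then show ?case using assms by (simp add: idp_def)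
next
  case (Suc m)
  have "idp (Suc m) = perm_dsum (idp m) [1]" by (simp add: idp_def perm_dsum_def)
  then show ?case using Suc assms unfolding closed_under_def by simp
qed

lemma decp_in: assumes "[1] \<in> Av B" "closed_under perm_ssum (Av B)"
  shows "m \<ge> 1 \<Longrightarrow> decp m \<in> Av B"
proof (induction m rule: nat_induct_at_least)
  case base then show ?case using assms by (simp add: decp_def)
next
  case (Suc m)
  have "[1..<Suc m+1] = 1 # map Suc [1..<m+1]" by (simp add: upt_conv_Cons map_Suc_upt)
  then have "decp (Suc m) = perm_ssum (decp m) [1]"
    by (simp add: decp_def perm_ssum_def rev_map)
  then show ?case using Suc assms unfolding closed_under_def by simp
qed

lemma length_idp[simp]: "length (idp m) = m" by (simp add: idp_def)
lemma length_decp[simp]: "length (decp m) = m" by (simp add: decp_def)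

lemma SC_aux:
  assumes k: "k \<ge> 2" and \<rho>: "\<rho> \<in> Av B" "length \<rho> = k - 1"
    and f: "\<And>u. u \<in> Av_n (k-1) B \<Longrightarrow> f u \<rho> \<in> Av B \<and> f \<rho> u \<in> Av B \<and>
       pat {0..<k-1} (f u \<rho>) = u \<and> pat {k-1..<(k-1)+(k-1)} (f u \<rho>) = \<rho> \<and>
       pat {0..<k-1} (f \<rho> u) = \<rho> \<and> pat {k-1..<(k-1)+(k-1)} (f \<rho> u) = u \<and>
       length (f u \<rho>) = 2*(k-1) \<and> length (f \<rho> u) = 2*(k-1)"
  shows "strongly_connected (ov_V k B) (ov_E k B) (ov_src k) (ov_tgt k)"
  unfolding strongly_connected_def
proof (intro ballI)
  fix u v assume u: "u \<in> ov_V k B" and v: "v \<in> ov_V k B"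
  have "(u, \<rho>) \<in> (ovrel k B)\<^sup>*"
    using reach[of k "f u \<rho>" B "k-1"] f[of u] u k unfolding ov_V_def Av_iff by auto
  moreover have "(\<rho>, v) \<in> (ovrel k B)\<^sup>*"
    using reach[of k "f \<rho> v" B "k-1"] f[of v] v k unfolding ov_V_def Av_iff by auto
  ultimately show "(u, v) \<in> {(ov_src k e, ov_tgt k e) |e. e \<in> ov_E k B}\<^sup>*"
    unfolding ovrel_def by simp
qed

lemma SC:
  assumes k: "k \<ge> 1" and ne: "Av B \<noteq> {}"
    and cl: "closed_under perm_dsum (Av B) \<or> closed_under perm_ssum (Av B)"
  shows "strongly_connected (ov_V k B) (ov_E k B) (ov_src k) (ov_tgt k)"
proof (cases "k = 1")
  case True
  then show ?thesis unfolding strongly_connected_def ov_V_def Av_n_def by auto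
next
  case False
  then have k2: "k \<ge> 2" using k by simp
  have one: "[1] \<in> Av B" using one_in_Av[OF ne] .
  have sub: "Av_n (k-1) B \<subseteq> Av B" using Av_n_Av[of "k-1" B] k2 by simp
  have Avn: "\<And>u. u \<in> Av_n (k-1) B \<Longrightarrow> u \<in> Av B \<and> is_perm u \<and> length u = k-1"
  proof -
    fix u assume u: "u \<in> Av_n (k-1) B"
    then have "u \<in> Av B" using sub by blast
    moreover from u have "is_perm u \<and> length u = k-1" by (simp add: Av_n_def)
    ultimately show "u \<in> Av B \<and> is_perm u \<and> length u = k-1" by simp
  qed
  show ?thesis
  proof (cases "closed_under perm_dsum (Av B)")
    case True
    have r: "idp (k-1) \<in> Av B" using idp_in[OF one True] k2 by simp
    then have rp: "is_perm (idp (k-1))" using Av_iff by blast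
    show ?thesis
    proof (rule SC_aux[OF k2 r, where f = perm_dsum])
      show "length (idp (k-1)) = k - 1" by simp
      fix u assume "u \<in> Av_n (k-1) B"
      then have u: "u \<in> Av B" "is_perm u" "length u = k-1" using Avn by auto
      have m1: "perm_dsum u (idp (k-1)) \<in> Av B" and m2: "perm_dsum (idp (k-1)) u \<in> Av B"
        using True u r unfolding closed_under_def by blast+
      have p1: "pat {0..<k-1} (perm_dsum u (idp (k-1))) = u"
        using pat_prefix[OF u(2)] u(3) unfolding perm_dsum_def by metis
      have p2: "pat {k-1..<(k-1)+(k-1)} (perm_dsum u (idp (k-1))) = idp (k-1)"
        using pat_suffix[OF rp u(3), of "length u"] unfolding perm_dsum_def by simp
      have p3: "pat {0..<k-1} (perm_dsum (idp (k-1)) u) = idp (k-1)"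
        using pat_prefix[OF rp] unfolding perm_dsum_def by (metis length_idp)
      have p4: "pat {k-1..<(k-1)+(k-1)} (perm_dsum (idp (k-1)) u) = u"
        using pat_suffix[OF u(2), of "idp (k-1)" "k-1" "length (idp (k-1))"] u(3)
        unfolding perm_dsum_def by simp
      show "perm_dsum u (idp (k-1)) \<in> Av B \<and> perm_dsum (idp (k-1)) u \<in> Av B \<and>
       pat {0..<k-1} (perm_dsum u (idp (k-1))) = u \<and> pat {k-1..<(k-1)+(k-1)} (perm_dsum u (idp (k-1))) = idp (k-1) \<and>
       pat {0..<k-1} (perm_dsum (idp (k-1)) u) = idp (k-1) \<and> pat {k-1..<(k-1)+(k-1)} (perm_dsum (idp (k-1)) u) = u \<and>
       length (perm_dsum u (idp (k-1))) = 2*(k-1) \<and> length (perm_dsum (idp (k-1)) u) = 2*(k-1)"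
        using m1 m2 p1 p2 p3 p4 u(3) by (simp add: perm_dsum_def)
    qed
  next
    case False
    then have c: "closed_under perm_ssum (Av B)" using cl by simp
    have r: "decp (k-1) \<in> Av B" using decp_in[OF one c] k2 by simp
    then have rp: "is_perm (decp (k-1))" using Av_iff by blast
    show ?thesis
    proof (rule SC_aux[OF k2 r, where f = perm_ssum])
      show "length (decp (k-1)) = k - 1" by simp
      fix u assume "u \<in> Av_n (k-1) B"
      then have u: "u \<in> Av B" "is_perm u" "length u = k-1" using Avn by auto
      have m1: "perm_ssum u (decp (k-1)) \<in> Av B" and m2: "perm_ssum (decp (k-1)) u \<in> Av B"
        using c u r unfolding closed_under_def by blast+
      have p1: "pat {0..<k-1} (perm_ssum u (decp (k-1))) = u"
        using pat_prefix2[OF u(2)] u(3) unfolding perm_ssum_def by metis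
      have p2: "pat {k-1..<(k-1)+(k-1)} (perm_ssum u (decp (k-1))) = decp (k-1)"
        using pat_suffix2[OF rp, of "map (\<lambda>x. x + length (decp (k-1))) u" "k-1"] u(3) unfolding perm_ssum_def by simp
      have p3: "pat {0..<k-1} (perm_ssum (decp (k-1)) u) = decp (k-1)"
        using pat_prefix2[OF rp] unfolding perm_ssum_def by (metis length_decp)
      have p4: "pat {k-1..<(k-1)+(k-1)} (perm_ssum (decp (k-1)) u) = u"
        using pat_suffix2[OF u(2), of "map (\<lambda>x. x + length u) (decp (k-1))" "k-1"] u(3)
        unfolding perm_ssum_def by simp
      show "perm_ssum u (decp (k-1)) \<in> Av B \<and> perm_ssum (decp (k-1)) u \<in> Av B \<and>
       pat {0..<k-1} (perm_ssum u (decp (k-1))) = u \<and> pat {k-1..<(k-1)+(k-1)} (perm_ssum u (decp (k-1))) = decp (k-1) \<and>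
       pat {0..<k-1} (perm_ssum (decp (k-1)) u) = decp (k-1) \<and> pat {k-1..<(k-1)+(k-1)} (perm_ssum (decp (k-1)) u) = u \<and>
       length (perm_ssum u (decp (k-1))) = 2*(k-1) \<and> length (perm_ssum (decp (k-1)) u) = 2*(k-1)"
        using m1 m2 p1 p2 p3 p4 u(3) by (simp add: perm_ssum_def)
    qed
  qed
qed


lemma length_pat: "length (pat I \<sigma>) = card {i. i < length \<sigma> \<and> i \<in> I}"
  by (simp add: pat_def length_nths)

lemma one_avoids: assumes "length \<tau> \<ge> 2" shows "avoids [1] \<tau>"
proof -
  have "\<And>I. length (pat I [1]) \<le> 1"
  proof -
    fix I
    have "{i. i < length [1::nat] \<and> i \<in> I} \<subseteq> {0}" by auto
    then show "length (pat I [1]) \<le> 1" unfolding length_pat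
      using card_mono[of "{0::nat}"] by fastforce
  qed
  then show ?thesis using assms unfolding avoids_def contains_def
    by (metis numeral_le_one_iff order_trans semiring_norm(69))
qed

lemma nths_restrict: "nths xs (I \<inter> {..<length xs}) = nths xs I"
proof (induction xs arbitrary: I)
  case Nil then show ?case by simp
next
  case (Cons x xs)
  have "{j. Suc j \<in> I \<inter> {..<length (x # xs)}} = {j. Suc j \<in> I} \<inter> {..<length xs}" by auto
  then show ?case using Cons[of "{j. Suc j \<in> I}"] by (simp add: nths_Cons)
qed

lemma contains_of_nths: "std (nths xs I) = \<tau> \<Longrightarrow> contains xs \<tau>"
  unfolding contains_def pat_def by (metis inf_le2 nths_restrict)

lemma hd_last_std: assumes "ys \<noteq> []" "hd ys < last ys" shows "hd (std ys) < last (std ys)"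
proof -
  have "hd ys \<in> set ys" "last ys \<in> set ys" using assms by auto
  then show ?thesis using rk_strict assms by (simp add: std_rk hd_map last_map)
qed

lemma set_perm: "is_perm p \<Longrightarrow> set p = {1..length p}" by (simp add: is_perm_def)

lemma perm_dsum_perm: "is_perm a \<Longrightarrow> is_perm b \<Longrightarrow> is_perm (perm_dsum a b)"
  unfolding is_perm_def perm_dsum_def by auto

lemma perm_ssum_perm: "is_perm a \<Longrightarrow> is_perm b \<Longrightarrow> is_perm (perm_ssum a b)"
  unfolding is_perm_def perm_ssum_def by auto

lemma hd_last_std2: assumes "ys \<noteq> []" "hd ys > last ys" shows "hd (std ys) > last (std ys)"
proof -
  have "hd ys \<in> set ys" "last ys \<in> set ys" using assms by auto
  then show ?thesis using rk_strict assms by (simp add: std_rk hd_map last_map)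
qed

lemma dsum_closed:
  assumes "hd \<tau> > last \<tau>"
  shows "closed_under perm_dsum (Av {\<tau>})"
  unfolding closed_under_def
proof (intro ballI)
  fix a b assume a: "a \<in> Av {\<tau>}" and b: "b \<in> Av {\<tau>}"
  then have ap: "is_perm a" "length a \<ge> 1" "\<not> contains a \<tau>"
    and bp: "is_perm b" "length b \<ge> 1" "\<not> contains b \<tau>"
    unfolding Av_iff avoids_def by auto
  have "\<not> contains (perm_dsum a b) \<tau>"
  proof
    assume "contains (perm_dsum a b) \<tau>"
    then obtain I where I: "std (nths (perm_dsum a b) I) = \<tau>" unfolding contains_def pat_def by blast
    define xa where "xa = nths a I"
    define xb where "xb = nths b {j. j + length a \<in> I}"
    have eq: "nths (perm_dsum a b) I = xa @ map (\<lambda>x. x + length a) xb"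
      unfolding perm_dsum_def xa_def xb_def by (simp add: nths_append nths_map)
    show False
    proof (cases "xb = []")
      case True
      then have "std (nths a I) = \<tau>" using I eq xa_def by simp
      then have "contains a \<tau>" by (rule contains_of_nths)
      then show False using ap by simp
    next
      case xbne: False
      show False
      proof (cases "xa = []")
        case True
        then have "std xb = \<tau>" using I eq std_shift by simp
        then have "std (nths b {j. j + length a \<in> I}) = \<tau>" using xb_def by simp
        then have "contains b \<tau>" by (rule contains_of_nths)
        then show False using bp by simp
      next
        case False
        have "set xa \<subseteq> set a" unfolding xa_def by (rule set_nths_subset)
        then have "hd xa \<in> set a" using False hd_in_set by blast
        then have h: "hd xa \<le> length a" using set_perm[OF ap(1)] by auto
        have "set xb \<subseteq> set b" unfolding xb_def by (rule set_nths_subset)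
        then have "last xb \<in> set b" using xbne last_in_set by blast
        then have "last xb \<ge> 1" using set_perm[OF bp(1)] by auto
        then have "last (map (\<lambda>x. x + length a) xb) > length a"
          using xbne by (simp add: last_map)
        then have "hd (xa @ map (\<lambda>x. x + length a) xb) < last (xa @ map (\<lambda>x. x + length a) xb)"
          using h False xbne by simp
        moreover have "std (xa @ map (\<lambda>x. x + length a) xb) = \<tau>" using I eq by simp
        ultimately have "hd \<tau> < last \<tau>" using hd_last_std[of "xa @ map (\<lambda>x. x + length a) xb"] False by simp
        then show False using assms by simp
      qed
    qed
  qed
  then show "perm_dsum a b \<in> Av {\<tau>}" unfolding Av_iff avoids_def
    using perm_dsum_perm[OF ap(1) bp(1)] ap bp by (simp add: perm_dsum_def)
qed

lemma ssum_closed: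
  assumes "hd \<tau> < last \<tau>"
  shows "closed_under perm_ssum (Av {\<tau>})"
  unfolding closed_under_def
proof (intro ballI)
  fix a b assume a: "a \<in> Av {\<tau>}" and b: "b \<in> Av {\<tau>}"
  then have ap: "is_perm a" "length a \<ge> 1" "\<not> contains a \<tau>"
    and bp: "is_perm b" "length b \<ge> 1" "\<not> contains b \<tau>"
    unfolding Av_iff avoids_def by auto
  have "\<not> contains (perm_ssum a b) \<tau>"
  proof
    assume "contains (perm_ssum a b) \<tau>"
    then obtain I where I: "std (nths (perm_ssum a b) I) = \<tau>" unfolding contains_def pat_def by blast
    define xa where "xa = nths a I"
    define xb where "xb = nths b {j. j + length a \<in> I}"
    have eq: "nths (perm_ssum a b) I = map (\<lambda>x. x + length b) xa @ xb"
      unfolding perm_ssum_def xa_def xb_def by (simp add: nths_append nths_map)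
    show False
    proof (cases "xb = []")
      case True
      then have "std xa = \<tau>" using I eq std_shift by simp
      then have "std (nths a I) = \<tau>" using xa_def by simp
      then have "contains a \<tau>" by (rule contains_of_nths)
      then show False using ap by simp
    next
      case xbne: False
      show False
      proof (cases "xa = []")
        case True
        then have "std (nths b {j. j + length a \<in> I}) = \<tau>" using I eq xb_def by simp
        then have "contains b \<tau>" by (rule contains_of_nths)
        then show False using bp by simp
      next
        case False
        have "set xa \<subseteq> set a" unfolding xa_def by (rule set_nths_subset)
        then have "hd xa \<in> set a" using False hd_in_set by blast
        then have h: "hd (map (\<lambda>x. x + length b) xa) > length b" using set_perm[OF ap(1)] False
          by (auto simp: hd_map)
        have "set xb \<subseteq> set b" unfolding xb_def by (rule set_nths_subset)
        then have "last xb \<in> set b" using xbne last_in_set by blast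
        then have l: "last xb \<le> length b" using set_perm[OF bp(1)] by auto
        have "hd (map (\<lambda>x. x + length b) xa @ xb) > last (map (\<lambda>x. x + length b) xa @ xb)"
          using h l False xbne by simp
        moreover have "std (map (\<lambda>x. x + length b) xa @ xb) = \<tau>" using I eq by simp
        ultimately have "hd \<tau> > last \<tau>" using hd_last_std2[of "map (\<lambda>x. x + length b) xa @ xb"] False by simp
        then show False using assms by simp
      qed
    qed
  qed
  then show "perm_ssum a b \<in> Av {\<tau>}" unfolding Av_iff avoids_def
    using perm_ssum_perm[OF ap(1) bp(1)] ap bp by (simp add: perm_ssum_def)
qed

lemma single_ok:
  assumes "\<tau> \<in> allPerms" "length \<tau> \<ge> 2"
  shows "{\<tau>} \<subseteq> allPerms \<and> Av {\<tau>} \<noteq> {} \<and>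
    (closed_under perm_dsum (Av {\<tau>}) \<or> closed_under perm_ssum (Av {\<tau>}))"
proof -
  have "[1] \<in> Av {\<tau>}" unfolding Av_iff using one_avoids[OF assms(2)] by (simp add: is_perm_def)
  moreover have "hd \<tau> \<noteq> last \<tau>"
  proof -
    have d: "distinct \<tau>" using assms(1) is_perm_distinct allPerms_def by auto
    have ne: "\<tau> \<noteq> []" using assms(2) by auto
    have "hd \<tau> = \<tau> ! 0" "last \<tau> = \<tau> ! (length \<tau> - 1)"
      using hd_conv_nth[OF ne] last_conv_nth[OF ne] by auto
    moreover have "\<tau> ! 0 \<noteq> \<tau> ! (length \<tau> - 1)" using nth_eq_iff_index_eq[OF d, of 0 "length \<tau> - 1"] assms(2) ne by simp
    ultimately show ?thesis by simp
  qed
  then have "hd \<tau> > last \<tau> \<or> hd \<tau> < last \<tau>" by auto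
  ultimately show ?thesis using assms dsum_closed ssum_closed by blast
qed


lemma sum_app: "(\<Sum>i\<in>A. f i) x = (\<Sum>i\<in>A. f i x)"
  by (induction A rule: infinite_finite_induct) auto

lemma scaleR_app: "(c *\<^sub>R f) x = c *\<^sub>R f x" by (simp add: scaleR_fun_def)

lemma span_inter_zero:
  fixes C :: "'a::real_vector set"
  assumes ind: "independent C" and fin: "finite C" and R: "R \<subseteq> C" and K: "K \<subseteq> C" and dis: "R \<inter> K = {}"
    and x: "x \<in> span R" "x \<in> span K"
  shows "x = 0"
proof -
  have fR: "finite R" "finite K" using fin R K finite_subset by auto
  obtain a where a: "x = (\<Sum>v\<in>R. a v *\<^sub>R v)" using x(1) span_finite[OF fR(1)] by auto
  obtain b where b: "x = (\<Sum>v\<in>K. b v *\<^sub>R v)" using x(2) span_finite[OF fR(2)] by auto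
  define u where "u v = (if v \<in> R then a v else - b v)" for v
  have "(\<Sum>v\<in>R \<union> K. u v *\<^sub>R v) = (\<Sum>v\<in>R. u v *\<^sub>R v) + (\<Sum>v\<in>K. u v *\<^sub>R v)"
    by (rule sum.union_disjoint) (use fR dis in auto)
  also have "(\<Sum>v\<in>R. u v *\<^sub>R v) = x" unfolding a u_def by (rule sum.cong) auto
  also have "(\<Sum>v\<in>K. u v *\<^sub>R v) = - x" unfolding b u_def using dis
    by (auto simp: sum_negf[symmetric] intro!: sum.cong)
  finally have "(\<Sum>v\<in>R \<union> K. u v *\<^sub>R v) = 0" by simp
  then have "\<forall>v\<in>R \<union> K. u v = 0"
    using ind[unfolded independent_explicit_finite_subsets] R K fR by blast
  then have "\<forall>v\<in>R. a v = 0" unfolding u_def by (metis UnI1)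
  then show ?thesis unfolding a by simp
qed

lemma rank_nullity:
  fixes f :: "'a::real_vector \<Rightarrow> 'b::real_vector"
  assumes lin: "linear f" and S: "subspace S" and fin: "finite T" "S \<subseteq> span T"
  shows "dim S = dim {x\<in>S. f x = 0} + dim (f ` S)"
proof -
  define K where "K = {x\<in>S. f x = 0}"
  obtain BK where BK: "BK \<subseteq> K" "independent BK" "K \<subseteq> span BK" "card BK = dim K"
    using basis_exists[of K] by blast
  have "BK \<subseteq> S" using BK(1) K_def by auto
  then obtain C where C: "BK \<subseteq> C" "C \<subseteq> S" "independent C" "S \<subseteq> span C"
    using maximal_independent_subset_extend[of BK S] BK(2) by blast
  have finC: "finite C" using independent_span_bound[OF fin(1) C(3)] C(2) fin(2) by auto
  have dimS: "dim S = card C" using basis_card_eq_dim[OF C(2) C(4) C(3)] by simp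
  define R where "R = C - BK"
  have spanC: "span C \<subseteq> S" using C(2) S by (simp add: span_minimal)
  have fBK: "\<And>x. x \<in> BK \<Longrightarrow> f x = 0" using BK(1) K_def by auto
  have inj: "inj_on f (span R)"
  proof (rule inj_onI)
    fix x y assume xy: "x \<in> span R" "y \<in> span R" "f x = f y"
    have d: "x - y \<in> span R" using xy by (simp add: span_diff)
    have "span R \<subseteq> span C" unfolding R_def by (rule span_mono) auto
    then have "x - y \<in> S" using d spanC by auto
    moreover have "f (x - y) = 0" using xy lin by (simp add: linear_diff)
    ultimately have "x - y \<in> span BK" using BK(3) K_def by auto
    then have "x - y = 0"
      using span_inter_zero[OF C(3) finC _ C(1) _ d] R_def by auto
    then show "x = y" by simp
  qed
  have indR: "independent (f ` R)"
    using linear_independent_injective_image[OF lin _ inj] independent_mono[OF C(3)] R_def by auto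
  have cardR: "card (f ` R) = card R"
    using card_image inj_on_subset[OF inj span_superset] by blast
  have "f ` S \<subseteq> span (f ` R)"
  proof -
    have "f ` S \<subseteq> f ` span C" using C(4) by auto
    also have "\<dots> = span (f ` C)" using linear_span_image[OF lin] by simp
    also have "f ` C \<subseteq> insert 0 (f ` R)" using fBK R_def by auto
    then have "span (f ` C) \<subseteq> span (f ` R)"
      by (metis span_insert_0 span_mono)
    finally show ?thesis .
  qed
  moreover have "f ` R \<subseteq> f ` S" using C(2) R_def by auto
  ultimately have "dim (f ` S) = card R"
    using basis_card_eq_dim[of "f ` R" "f ` S"] indR cardR by simp
  moreover have "card C = card BK + card R"
    using card_Un_disjoint[of BK R] finC C(1) R_def finite_subset
    by (metis Diff_disjoint Diff_partition finite_Diff)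
  ultimately show ?thesis using dimS BK(4) K_def by simp
qed


declare scaleR_app[simp]

definition dl :: "'a \<Rightarrow> 'a \<Rightarrow> real" where "dl a = (\<lambda>x. if x = a then 1 else 0)"
definition suppd :: "'a set \<Rightarrow> ('a \<Rightarrow> real) set" where "suppd A = {x. \<forall>e. e \<notin> A \<longrightarrow> x e = 0}"
definition tot :: "'a set \<Rightarrow> ('a \<Rightarrow> real) \<Rightarrow> real" where "tot A x = (\<Sum>a\<in>A. x a)"

lemma subspace_suppd: "subspace (suppd A)"
  unfolding subspace_def suppd_def by auto

lemma linear_tot: "linear (tot A)"
  by (rule linearI) (auto simp: tot_def sum.distrib sum_distrib_left)

lemma dl_suppd: "a \<in> A \<Longrightarrow> dl a \<in> suppd A" by (auto simp: dl_def suppd_def)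

lemma suppd_expand: assumes "finite A" "x \<in> suppd A" shows "x = (\<Sum>a\<in>A. x a *\<^sub>R dl a)"
proof
  fix y
  have "(\<Sum>a\<in>A. x a *\<^sub>R dl a) y = (\<Sum>a\<in>A. if a = y then x y else 0)"
    unfolding sum_app by (rule sum.cong) (auto simp: dl_def)
  also have "\<dots> = (if y \<in> A then x y else 0)" using assms(1) by (simp add: sum.delta)
  also have "\<dots> = x y" using assms(2) by (auto simp: suppd_def)
  finally show "x y = (\<Sum>a\<in>A. x a *\<^sub>R dl a) y" by simp
qed

lemma span_dl: assumes "finite A" shows "span (dl ` A) = suppd A"
proof
  show "span (dl ` A) \<subseteq> suppd A"
    by (rule span_minimal) (auto simp: subspace_suppd dl_suppd)
  show "suppd A \<subseteq> span (dl ` A)"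
  proof
    fix x assume "x \<in> suppd A"
    then have "x = (\<Sum>a\<in>A. x a *\<^sub>R dl a)" using suppd_expand assms by blast
    also have "\<dots> \<in> span (dl ` A)"
      by (intro span_sum span_scale span_base) auto
    finally show "x \<in> span (dl ` A)" .
  qed
qed

lemma inj_dl: "inj dl"
  by (rule injI) (metis dl_def zero_neq_one)

lemma indep_dl: "independent (dl ` A)"
  unfolding independent_explicit_finite_subsets
proof (intro allI impI ballI)
  fix S u v assume S: "S \<subseteq> dl ` A" "finite S" and eq: "(\<Sum>v\<in>S. u v *\<^sub>R v) = 0" and v: "v \<in> S"
  obtain a where a: "v = dl a" using S v by auto
  have "0 = (\<Sum>w\<in>S. u w *\<^sub>R w) a" using eq by simp
  also have "\<dots> = (\<Sum>w\<in>S. if w = v then u v else 0)"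
    unfolding sum_app
  proof (rule sum.cong)
    fix w assume "w \<in> S"
    then obtain b where b: "w = dl b" using S by auto
    show "(u w *\<^sub>R w) a = (if w = v then u v else 0)"
    proof (cases "w = v")
      case True
      then show ?thesis using a by (simp add: dl_def)
    next
      case False
      then have "b \<noteq> a" using a b by auto
      then show ?thesis using False b by (simp add: dl_def)
    qed
  qed simp
  also have "\<dots> = u v" using S(2) v by (simp add: sum.delta')
  finally show "u v = 0" by simp
qed

lemma dim_suppd: assumes "finite A" shows "dim (suppd A) = card A"
proof -
  have "dim (suppd A) = card (dl ` A)"
    using dim_span_eq_card_independent[OF indep_dl[of A]] span_dl[OF assms] by simp
  then show ?thesis using card_image[OF inj_on_subset[OF inj_dl]] by simp
qed

lemma tot_dl: "a \<in> A \<Longrightarrow> finite A \<Longrightarrow> tot A (dl a) = 1"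
  by (simp add: tot_def dl_def sum.delta')

lemma image_UNIV_real:
  fixes f :: "'a::real_vector \<Rightarrow> real"
  assumes "linear f" "subspace S" "x \<in> S" "f x = 1"
  shows "f ` S = UNIV"
proof -
  have "\<And>c. c \<in> f ` S"
  proof -
    fix c
    have "c *\<^sub>R x \<in> S" using assms(2,3) by (simp add: subspace_scale)
    moreover have "f (c *\<^sub>R x) = c" using assms(1,4) linear_scale by fastforce
    ultimately show "c \<in> f ` S" by (metis image_eqI)
  qed
  then show ?thesis by auto
qed

lemma dim_kernel_functional:
  fixes f :: "'a::real_vector \<Rightarrow> real"
  assumes "linear f" "subspace S" "finite T" "S \<subseteq> span T" "x \<in> S" "f x = 1"
  shows "dim S = dim {x\<in>S. f x = 0} + 1"
  using rank_nullity[OF assms(1-4)] image_UNIV_real[OF assms(1,2,5,6)] by simp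

locale grph =
  fixes V :: "'v set" and E :: "'e set" and s t :: "'e \<Rightarrow> 'v"
  assumes finV: "finite V" and finE: "finite E" and st: "\<And>e. e \<in> E \<Longrightarrow> s e \<in> V \<and> t e \<in> V"
    and sc: "strongly_connected V E s t"
begin

definition bd :: "('e \<Rightarrow> real) \<Rightarrow> 'v \<Rightarrow> real" where
  "bd x = (\<lambda>v. tot {e\<in>E. t e = v} x - tot {e\<in>E. s e = v} x)"

lemma linear_bd: "linear bd"
  by (rule linearI) (auto simp: bd_def tot_def sum.distrib sum_distrib_left algebra_simps)

definition Z where "Z = {x \<in> suppd E. bd x = 0}"
definition W where "W = {y \<in> suppd V. tot V y = 0}"

lemma subspace_Z: "subspace Z"
  unfolding Z_def subspace_def using subspace_suppd[of E] linear_bd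
  by (auto simp: subspace_def linear_add linear_scale linear_0)

lemma subspace_W: "subspace W"
  unfolding W_def subspace_def using subspace_suppd[of V] linear_tot[of V]
  by (auto simp: subspace_def linear_add linear_scale linear_0)

lemma bd_dl: "e \<in> E \<Longrightarrow> bd (dl e) = dl (t e) - dl (s e)"
  unfolding bd_def tot_def dl_def using finE
  by (auto simp: fun_eq_iff sum.delta' split: if_splits)

lemma tot_bd: assumes "x \<in> suppd E" shows "tot V (bd x) = 0"
proof -
  have g1: "(\<Sum>v\<in>V. \<Sum>e\<in>{e\<in>E. t e = v}. x e) = (\<Sum>e\<in>E. x e)"
    by (rule sum.group) (use finV finE st in auto)
  have g2: "(\<Sum>v\<in>V. \<Sum>e\<in>{e\<in>E. s e = v}. x e) = (\<Sum>e\<in>E. x e)"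
    by (rule sum.group) (use finV finE st in auto)
  show ?thesis unfolding bd_def tot_def using g1 g2 by (simp add: sum_subtractf)
qed

lemma bd_suppd: "bd x \<in> suppd V"
  unfolding suppd_def
proof (intro CollectI allI impI)
  fix v assume v: "v \<notin> V"
  have h: "{e\<in>E. t e = v} = {}" "{e\<in>E. s e = v} = {}" using st v by auto
  show "bd x v = 0" unfolding bd_def tot_def h by simp
qed

lemma bd_image_sub: "bd ` suppd E \<subseteq> W"
  unfolding W_def using bd_suppd tot_bd by auto

lemma reach_img:
  assumes "(u, v) \<in> {(s e, t e) | e. e \<in> E}\<^sup>*"
  shows "dl v - dl u \<in> bd ` suppd E"
  using assms
proof (induction rule: rtrancl_induct)
  case base
  have "bd 0 = 0" using linear_bd linear_0 by blast
  then show ?case using subspace_suppd[of E] subspace_0 by force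
next
  case (step w v)
  then obtain e where e: "e \<in> E" "w = s e" "v = t e" by auto
  have sub: "subspace (bd ` suppd E)" using linear_subspace_image[OF linear_bd subspace_suppd] .
  have "bd (dl e) \<in> bd ` suppd E" using dl_suppd[OF e(1)] by auto
  then have "dl w - dl u + bd (dl e) \<in> bd ` suppd E" using step.IH sub subspace_add by blast
  moreover have "dl w - dl u + bd (dl e) = dl v - dl u"
    using bd_dl[OF e(1)] e(2,3) by (simp add: fun_eq_iff)
  ultimately show ?case by metis
qed

lemma bd_image: assumes "V \<noteq> {}" shows "bd ` suppd E = W"
proof
  show "bd ` suppd E \<subseteq> W" by (rule bd_image_sub)
  show "W \<subseteq> bd ` suppd E"
  proof
    fix y assume y: "y \<in> W"
    obtain v0 where v0: "v0 \<in> V" using assms by auto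
    have sub: "subspace (bd ` suppd E)" using linear_subspace_image[OF linear_bd subspace_suppd] .
    have yV: "y \<in> suppd V" using y unfolding W_def by simp
    have "y = (\<Sum>v\<in>V. y v *\<^sub>R dl v)" by (rule suppd_expand[OF finV yV])
    also have "\<dots> = (\<Sum>v\<in>V. y v *\<^sub>R (dl v - dl v0)) + (\<Sum>v\<in>V. y v *\<^sub>R dl v0)"
      by (simp only: scaleR_diff_right sum.distrib[symmetric] diff_add_cancel)
    also have "(\<Sum>v\<in>V. y v *\<^sub>R dl v0) = (\<Sum>v\<in>V. y v) *\<^sub>R dl v0"
      by (simp only: scaleR_sum_left)
    also have "(\<Sum>v\<in>V. y v) = 0" using y by (simp add: W_def tot_def)
    finally have yeq: "y = (\<Sum>v\<in>V. y v *\<^sub>R (dl v - dl v0))" by (metis add_0_right scaleR_zero_left)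
    have mem: "\<And>v. v \<in> V \<Longrightarrow> dl v - dl v0 \<in> bd ` suppd E"
    proof -
      fix v assume "v \<in> V"
      then have "(v0, v) \<in> {(s e, t e) | e. e \<in> E}\<^sup>*"
        using sc v0 unfolding strongly_connected_def by blast
      then show "dl v - dl v0 \<in> bd ` suppd E" by (rule reach_img)
    qed
    have "(\<Sum>v\<in>V. y v *\<^sub>R (dl v - dl v0)) \<in> bd ` suppd E"
      by (rule subspace_sum[OF sub]) (rule subspace_scale[OF sub mem])
    then show "y \<in> bd ` suppd E" using yeq by metis
  qed
qed

lemma dim_W: assumes "V \<noteq> {}" shows "dim W + 1 = card V"
proof -
  obtain v0 where v0: "v0 \<in> V" using assms by auto
  have "dim (suppd V) = dim W + 1"
    unfolding W_def
    by (rule dim_kernel_functional[of "tot V" "suppd V" "dl ` V" "dl v0", OF linear_tot subspace_suppd finite_imageI[OF finV]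
        equalityD2[OF span_dl[OF finV]] dl_suppd[OF v0] tot_dl[OF v0 finV]])
  then show ?thesis using dim_suppd[OF finV] by simp
qed

lemma dim_Z: assumes "V \<noteq> {}" shows "dim Z + card V = card E + 1"
proof -
  have "dim (suppd E) = dim Z + dim (bd ` suppd E)"
    unfolding Z_def
    by (rule rank_nullity[OF linear_bd subspace_suppd, of "dl ` E"]) (use span_dl[OF finE] finE in auto)
  then show ?thesis using dim_suppd[OF finE] bd_image[OF assms] dim_W[OF assms] by simp
qed

definition Z0 where "Z0 = {x \<in> Z. tot E x = 0}"

lemma dim_Z0: assumes "V \<noteq> {}" "x0 \<in> Z" "tot E x0 = 1"
  shows "dim Z0 + card V = card E"
proof -
  have "dim Z = dim Z0 + 1"
    unfolding Z0_def
    by (rule dim_kernel_functional[OF linear_tot subspace_Z, of "dl ` E" x0])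
       (use span_dl[OF finE] finE assms Z_def in auto)
  then show ?thesis using dim_Z[OF assms(1)] by simp
qed

end

lemma sum_count_filter:
  "set C \<subseteq> A \<Longrightarrow> finite A \<Longrightarrow> (\<Sum>e\<in>{e\<in>A. P e}. real (count_list C e)) = real (length (filter P C))"
proof (induction C)
  case Nil then show ?case by simp
next
  case (Cons x xs)
  have "(\<Sum>e\<in>{e\<in>A. P e}. real (count_list (x # xs) e))
      = (\<Sum>e\<in>{e\<in>A. P e}. (if x = e then 1 else 0) + real (count_list xs e))"
    by (rule sum.cong) auto
  also have "\<dots> = (\<Sum>e\<in>{e\<in>A. P e}. (if x = e then 1 else 0)) + (\<Sum>e\<in>{e\<in>A. P e}. real (count_list xs e))"
    by (rule sum.distrib)
  also have "(\<Sum>e\<in>{e\<in>A. P e}. (if x = e then 1 else 0::real)) = (if P x then 1 else 0)"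
    using Cons.prems by (simp add: sum.delta)
  finally show ?case using Cons by simp
qed

lemma length_filter_count: "length (filter (\<lambda>e. f e = v) C) = count_list (map f C) v"
  by (induction C) auto

lemma count_rotate1: "count_list (rotate1 xs) v = count_list xs v"
  by (cases xs) auto

lemma count_distinct: "distinct xs \<Longrightarrow> count_list xs x = (if x \<in> set xs then 1 else 0)"
  by (induction xs) auto

context grph begin

definition X where "X = {cycle_vec C | C. simple_cycle V E s t C}"

lemma cycle_vec_Z: assumes C: "simple_cycle V E s t C" shows "cycle_vec C \<in> Z" "tot E (cycle_vec C) = 1"
proof -
  have CE: "set C \<subseteq> E" and ne: "C \<noteq> []" using C unfolding simple_cycle_def by auto
  have lenp: "real (length C) > 0" using ne by simp
  have supp: "cycle_vec C \<in> suppd E"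
    unfolding suppd_def cycle_vec_def using CE by (auto simp: count_list_0_iff)
  have rot: "map t C = rotate1 (map s C)"
  proof (rule nth_equalityI)
    show "length (map t C) = length (rotate1 (map s C))" by simp
    fix i assume "i < length (map t C)"
    then show "map t C ! i = rotate1 (map s C) ! i"
      using C unfolding simple_cycle_def by (simp add: nth_rotate1)
  qed
  have "\<And>v. bd (cycle_vec C) v = 0"
  proof -
    fix v
    have "tot {e\<in>E. t e = v} (cycle_vec C) = (\<Sum>e\<in>{e\<in>E. t e = v}. real (count_list C e)) / real (length C)"
      unfolding tot_def cycle_vec_def by (simp add: sum_divide_distrib)
    also have "\<dots> = real (count_list (map t C) v) / real (length C)"
      using sum_count_filter[OF CE finE, of "\<lambda>e. t e = v"] length_filter_count[of t v C] by simp
    also have "count_list (map t C) v = count_list (map s C) v"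
      using rot count_rotate1[of "map s C" v] by metis
    finally have a: "tot {e\<in>E. t e = v} (cycle_vec C) = real (count_list (map s C) v) / real (length C)" .
    have "tot {e\<in>E. s e = v} (cycle_vec C) = (\<Sum>e\<in>{e\<in>E. s e = v}. real (count_list C e)) / real (length C)"
      unfolding tot_def cycle_vec_def by (simp add: sum_divide_distrib)
    also have "\<dots> = real (count_list (map s C) v) / real (length C)"
      using sum_count_filter[OF CE finE, of "\<lambda>e. s e = v"] length_filter_count[of s v C] by simp
    finally show "bd (cycle_vec C) v = 0" unfolding bd_def using a by simp
  qed
  then show "cycle_vec C \<in> Z" unfolding Z_def using supp by auto
  have "tot E (cycle_vec C) = (\<Sum>e\<in>E. real (count_list C e)) / real (length C)"
    unfolding tot_def cycle_vec_def by (simp add: sum_divide_distrib)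
  also have "(\<Sum>e\<in>E. real (count_list C e)) = real (length C)"
    using sum_count_set[OF CE finE] by (metis of_nat_sum)
  finally show "tot E (cycle_vec C) = 1" using lenp by simp
qed

lemma finite_X: "finite X"
proof -
  have "{C. simple_cycle V E s t C} \<subseteq> {C. set C \<subseteq> E \<and> length C \<le> card E}"
  proof
    fix C assume "C \<in> {C. simple_cycle V E s t C}"
    then have "set C \<subseteq> E" "distinct C" unfolding simple_cycle_def by auto
    moreover have "length C \<le> card E"
      using card_mono[OF finE \<open>set C \<subseteq> E\<close>] distinct_card[OF \<open>distinct C\<close>] by simp
    ultimately show "C \<in> {C. set C \<subseteq> E \<and> length C \<le> card E}" by simp
  qed
  then have "finite {C. simple_cycle V E s t C}"
    using finite_lists_length_le[OF finE] finite_subset by blast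
  moreover have "X = cycle_vec ` {C. simple_cycle V E s t C}" unfolding X_def by auto
  ultimately show ?thesis by simp
qed

lemma exists_cycle:
  assumes zs: "z \<in> suppd E" and nn: "\<forall>e. z e \<ge> 0" and bz: "bd z = 0" and pos: "\<exists>e\<in>E. z e > 0"
  shows "\<exists>C. simple_cycle V E s t C \<and> (\<forall>e\<in>set C. z e > 0)"
proof -
  define H where "H = {e\<in>E. z e > 0}"
  have HE: "H \<subseteq> E" unfolding H_def by auto
  define sp where "sp P \<longleftrightarrow> P \<noteq> [] \<and> set P \<subseteq> H \<and> distinct (map s P) \<and>
      (\<forall>i. Suc i < length P \<longrightarrow> t (P!i) = s (P!Suc i))" for P
  have bound: "length P \<le> card E" if "sp P" for P
  proof -
    have "distinct P" "set P \<subseteq> E" using that HE unfolding sp_def by (auto simp: distinct_map)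
    then show ?thesis using card_mono[OF finE] distinct_card by metis
  qed
  obtain e0 where e0: "e0 \<in> E" "z e0 > 0" using pos by auto
  have "sp [e0]" unfolding sp_def H_def using e0 by simp
  then have "\<exists>P. sp P \<and> length P = 1" by force
  then obtain n where n: "\<exists>P. sp P \<and> length P = n" and nmax: "\<forall>m. (\<exists>P. sp P \<and> length P = m) \<longrightarrow> m \<le> n"
    using Nat.ex_has_greatest_nat[of "\<lambda>m. \<exists>P. sp P \<and> length P = m" 1 "card E"] bound by blast
  obtain P where P: "sp P" "length P = n" using n by blast
  have Pmax: "length Q \<le> length P" if "sp Q" for Q using nmax that P(2) by blast
  have Pne: "P \<noteq> []" and PH: "set P \<subseteq> H" and Pd: "distinct (map s P)"
    and Pc: "\<And>i. Suc i < length P \<Longrightarrow> t (P!i) = s (P!Suc i)"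
    using P(1) unfolding sp_def by auto
  define w where "w = t (last P)"
  have lastH: "last P \<in> H" using Pne PH last_in_set by blast
  then have lastE: "last P \<in> E" and lastz: "z (last P) > 0" unfolding H_def by auto
  have "z (last P) \<le> (\<Sum>e\<in>{e\<in>E. t e = w}. z e)"
    by (rule member_le_sum) (use lastE w_def nn finE in auto)
  moreover have "(\<Sum>e\<in>{e\<in>E. t e = w}. z e) = (\<Sum>e\<in>{e\<in>E. s e = w}. z e)"
  proof -
    have "bd z w = 0" using bz by simp
    then show ?thesis unfolding bd_def tot_def by simp
  qed
  ultimately have "(\<Sum>e\<in>{e\<in>E. s e = w}. z e) > 0" using lastz by linarith
  then obtain f where f: "f \<in> E" "s f = w" "z f > 0"
  proof -
    assume r: "\<And>f. f \<in> E \<Longrightarrow> s f = w \<Longrightarrow> 0 < z f \<Longrightarrow> thesis"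
    assume sp0: "(\<Sum>e\<in>{e\<in>E. s e = w}. z e) > 0"
    show thesis
    proof (rule ccontr)
      assume "\<not> thesis"
      then have "\<forall>e\<in>{e\<in>E. s e = w}. z e = 0" using r nn by (metis (mono_tags, lifting) mem_Collect_eq order_le_less)
      then have "(\<Sum>e\<in>{e\<in>E. s e = w}. z e) = 0" by simp
      then show False using sp0 by simp
    qed
  qed
  have fH: "f \<in> H" unfolding H_def using f by simp
  show ?thesis
  proof (cases "w \<in> set (map s P)")
    case False
    have "sp (P @ [f])" unfolding sp_def
    proof (intro conjI allI impI)
      show "P @ [f] \<noteq> []" by simp
      show "set (P @ [f]) \<subseteq> H" using PH fH by simp
      show "distinct (map s (P @ [f]))" using Pd False f(2) by simp
      fix i assume i: "Suc i < length (P @ [f])"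
      show "t ((P @ [f]) ! i) = s ((P @ [f]) ! Suc i)"
      proof (cases "Suc i < length P")
        case True
        then show ?thesis using Pc[OF True] by (simp add: nth_append)
      next
        case False
        then have ii: "Suc i = length P" using i by simp
        then have i1: "i = length P - 1" by simp
        have "(P @ [f]) ! i = last P" using Pne ii unfolding i1 by (simp add: nth_append last_conv_nth)
        moreover have "(P @ [f]) ! Suc i = f" using ii by (simp add: nth_append)
        ultimately show ?thesis using f(2) w_def by simp
      qed
    qed
    then have "length (P @ [f]) \<le> length P" by (rule Pmax)
    then show ?thesis by simp
  next
    case True
    then obtain j where j: "j < length P" "s (P!j) = w"
      by (auto simp: in_set_conv_nth)
    define C where "C = drop j P"
    have lenC: "length C = length P - j" unfolding C_def by simp
    have Cn: "\<And>i. i < length C \<Longrightarrow> C ! i = P ! (j + i)" unfolding C_def by simp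
    have "simple_cycle V E s t C" unfolding simple_cycle_def
    proof (intro conjI allI impI)
      show "C \<noteq> []" unfolding C_def using j by simp
      have "set C \<subseteq> set P" unfolding C_def by (rule set_drop_subset)
      then show "set C \<subseteq> E" using PH HE by blast
      then show "set (map s C) \<subseteq> V" using st by auto
      have "distinct (map s C)" unfolding C_def using Pd by (simp add: drop_map[symmetric])
      then show "distinct C" by (simp add: distinct_map)
      show "distinct (map s C)" by fact
      fix i assume i: "i < length C"
      show "t (C ! i) = s (C ! ((i + 1) mod length C))"
      proof (cases "i + 1 < length C")
        case True
        then show ?thesis using Cn[OF i] Cn[OF True] Pc[of "j+i"] lenC by simp
      next
        case False
        then have ii: "i + 1 = length C" using i by simp
        then have ji: "j + i = length P - 1" using lenC j by simp
        have "C ! i = last P" using Cn[OF i] Pne unfolding ji by (simp add: last_conv_nth)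
        moreover have "C ! ((i + 1) mod length C) = P ! j" using ii Cn[of 0] i by (cases C) auto
        ultimately show ?thesis using j(2) w_def by simp
      qed
    qed
    moreover have "\<forall>e\<in>set C. z e > 0"
    proof
      fix e assume "e \<in> set C"
      then have "e \<in> set P" unfolding C_def using set_drop_subset by fast
      then show "z e > 0" using PH H_def by auto
    qed
    ultimately show ?thesis by blast
  qed
qed

lemma Z_suppd: "x \<in> Z \<Longrightarrow> x \<in> suppd E" unfolding Z_def by simp
lemma Z_bd: "x \<in> Z \<Longrightarrow> bd x = 0" unfolding Z_def by simp

lemma decomp: "z \<in> Z \<Longrightarrow> \<forall>e. z e \<ge> 0 \<Longrightarrow> z \<in> span X"
proof (induction "card {e\<in>E. z e \<noteq> 0}" arbitrary: z rule: less_induct)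
  case less
  have zs: "z \<in> suppd E" and bz: "bd z = 0" using Z_suppd Z_bd less.prems(1) by auto
  show ?case
  proof (cases "\<exists>e\<in>E. z e > 0")
    case False
    have "z = 0"
    proof
      fix e show "z e = 0 e"
      proof (cases "e \<in> E")
        case True then show ?thesis using False less.prems(2) by (metis order_le_less zero_fun_apply)
      next
        case False then show ?thesis using zs unfolding suppd_def by simp
      qed
    qed
    then show ?thesis by (simp add: span_zero)
  next
    case True
    obtain C where C: "simple_cycle V E s t C" and Cpos: "\<forall>e\<in>set C. z e > 0"
      using exists_cycle[OF zs less.prems(2) bz True] by blast
    have Cne: "C \<noteq> []" and Cd: "distinct C" and CE: "set C \<subseteq> E" using C unfolding simple_cycle_def by auto
    have lenp: "real (length C) > 0" using Cne by simp
    define m where "m = Min (z ` set C)"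
    have fin: "finite (z ` set C)" "z ` set C \<noteq> {}" using Cne by auto
    obtain e0 where e0: "e0 \<in> set C" "z e0 = m" using Min_in[OF fin] m_def by auto
    have mpos: "m > 0" using e0 Cpos by auto
    have mle: "\<And>e. e \<in> set C \<Longrightarrow> m \<le> z e" unfolding m_def using fin(1) by simp
    define c where "c = m * real (length C)"
    define z' where "z' = z - c *\<^sub>R cycle_vec C"
    have z'e: "z' e = (if e \<in> set C then z e - m else z e)" for e
      unfolding z'_def c_def cycle_vec_def using count_distinct[OF Cd, of e] lenp by auto
    have z'Z: "z' \<in> Z" unfolding z'_def
      by (rule subspace_diff[OF subspace_Z less.prems(1) subspace_scale[OF subspace_Z cycle_vec_Z(1)[OF C]]])
    have z'nn: "\<forall>e. z' e \<ge> 0" using z'e mle less.prems(2) by simp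
    have "{e\<in>E. z' e \<noteq> 0} \<subset> {e\<in>E. z e \<noteq> 0}"
    proof
      show "{e\<in>E. z' e \<noteq> 0} \<subseteq> {e\<in>E. z e \<noteq> 0}" using z'e Cpos by auto
      have "e0 \<in> {e\<in>E. z e \<noteq> 0}" using e0 mpos CE by auto
      moreover have "e0 \<notin> {e\<in>E. z' e \<noteq> 0}" using z'e e0 by simp
      ultimately show "{e\<in>E. z' e \<noteq> 0} \<noteq> {e\<in>E. z e \<noteq> 0}" by blast
    qed
    then have "card {e\<in>E. z' e \<noteq> 0} < card {e\<in>E. z e \<noteq> 0}"
      by (rule psubset_card_mono[rotated]) (use finE in simp)
    then have "z' \<in> span X" using less.hyps z'Z z'nn by blast
    moreover have "cycle_vec C \<in> X" unfolding X_def using C by blast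
    ultimately have "z' + c *\<^sub>R cycle_vec C \<in> span X"
      using span_add span_scale span_base by metis
    moreover have "z' + c *\<^sub>R cycle_vec C = z" unfolding z'_def by simp
    ultimately show ?thesis by simp
  qed
qed

lemma reach_pos:
  assumes "(u, v) \<in> {(s e, t e) | e. e \<in> E}\<^sup>*"
  shows "\<exists>x\<in>suppd E. (\<forall>e. x e \<ge> 0) \<and> bd x = dl v - dl u"
  using assms
proof (induction rule: rtrancl_induct)
  case base
  have "bd 0 = 0" using linear_bd linear_0 by blast
  then have "bd 0 = dl u - dl u" by (simp only: diff_self)
  moreover have "(0::'e\<Rightarrow>real) \<in> suppd E" by (simp add: suppd_def)
  moreover have "\<forall>e. (0::'e\<Rightarrow>real) e \<ge> 0" by simp
  ultimately show ?case by blast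
next
  case (step w v)
  then obtain e where e: "e \<in> E" "w = s e" "v = t e" by auto
  obtain x where x: "x \<in> suppd E" "\<forall>e. x e \<ge> 0" "bd x = dl w - dl u" using step.IH by blast
  have "x + dl e \<in> suppd E" using x(1) dl_suppd[OF e(1)] subspace_suppd subspace_add by blast
  moreover have "\<forall>e'. (x + dl e) e' \<ge> 0" using x(2) by (simp add: dl_def)
  moreover have "bd (x + dl e) = dl v - dl u"
  proof -
    have "bd (x + dl e) = bd x + bd (dl e)" using linear_bd linear_add by blast
    then show ?thesis using x(3) bd_dl[OF e(1)] e by (simp add: fun_eq_iff)
  qed
  ultimately show ?case by blast
qed

lemma pos_circ: "\<exists>y\<in>Z. (\<forall>e. y e \<ge> 0) \<and> (\<forall>e\<in>E. y e \<ge> 1)"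
proof -
  have "\<forall>e\<in>E. \<exists>x. x \<in> Z \<and> (\<forall>e'. x e' \<ge> 0) \<and> x e \<ge> 1"
  proof
    fix e assume e: "e \<in> E"
    have "(t e, s e) \<in> {(s e, t e) | e. e \<in> E}\<^sup>*"
      using sc st[OF e] unfolding strongly_connected_def by blast
    then obtain x0 where x0: "x0 \<in> suppd E" "\<forall>e. x0 e \<ge> 0" "bd x0 = dl (s e) - dl (t e)"
      using reach_pos by blast
    have "x0 + dl e \<in> suppd E" using x0(1) dl_suppd[OF e] subspace_suppd subspace_add by blast
    moreover have "bd (x0 + dl e) = 0"
    proof -
      have "bd (x0 + dl e) = bd x0 + bd (dl e)" using linear_bd linear_add by blast
      then show ?thesis using x0(3) bd_dl[OF e] by (simp add: fun_eq_iff)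
    qed
    ultimately have "x0 + dl e \<in> Z" unfolding Z_def by simp
    moreover have "\<forall>e'. (x0 + dl e) e' \<ge> 0" using x0(2) by (simp add: dl_def)
    moreover have "(x0 + dl e) e \<ge> 1" using x0(2) by (simp add: dl_def)
    ultimately show "\<exists>x. x \<in> Z \<and> (\<forall>e'. x e' \<ge> 0) \<and> x e \<ge> 1" by blast
  qed
  then obtain p where p: "\<And>e. e \<in> E \<Longrightarrow> p e \<in> Z \<and> (\<forall>e'. p e e' \<ge> 0) \<and> p e e \<ge> 1"
    by metis
  define y where "y = (\<Sum>e\<in>E. p e)"
  have "y \<in> Z" unfolding y_def using p by (intro subspace_sum[OF subspace_Z]) auto
  moreover have "\<forall>e'. y e' \<ge> 0" unfolding y_def sum_app using p by (simp add: sum_nonneg)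
  moreover have "\<forall>e\<in>E. y e \<ge> 1"
  proof
    fix e assume e: "e \<in> E"
    have "p e e \<le> (\<Sum>e'\<in>E. p e' e)" by (rule member_le_sum) (use e p finE in auto)
    then show "y e \<ge> 1" unfolding y_def sum_app using p[OF e] by linarith
  qed
  ultimately show ?thesis by blast
qed

lemma Z_span: "Z \<subseteq> span X"
proof
  fix z assume z: "z \<in> Z"
  obtain y where y: "y \<in> Z" "\<forall>e. y e \<ge> 0" "\<forall>e\<in>E. y e \<ge> 1" using pos_circ by blast
  define l where "l = (\<Sum>e\<in>E. \<bar>z e\<bar>)"
  have l0: "l \<ge> 0" unfolding l_def by (simp add: sum_nonneg)
  define w where "w = z + l *\<^sub>R y"
  have wZ: "w \<in> Z" unfolding w_def using z y(1) subspace_Z by (simp add: subspace_add subspace_scale)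
  have wnn: "\<forall>e. w e \<ge> 0"
  proof
    fix e show "w e \<ge> 0"
    proof (cases "e \<in> E")
      case True
      have "\<bar>z e\<bar> \<le> l" unfolding l_def by (rule member_le_sum) (use True finE in auto)
      moreover have "l * 1 \<le> l * y e" using y(3) True l0 mult_left_mono[of 1 "y e" l] by simp
      ultimately show ?thesis unfolding w_def by simp
    next
      case False
      then have "z e = 0" "y e = 0" using Z_suppd[OF z] Z_suppd[OF y(1)] unfolding suppd_def by auto
      then show ?thesis unfolding w_def by simp
    qed
  qed
  have "w \<in> span X" by (rule decomp[OF wZ wnn])
  moreover have "y \<in> span X" by (rule decomp[OF y(1) y(2)])
  ultimately have "w - l *\<^sub>R y \<in> span X" by (intro span_diff span_scale)
  then show "z \<in> span X" unfolding w_def by simp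
qed

lemma X_props: "v \<in> X \<Longrightarrow> v \<in> Z \<and> tot E v = 1"
  unfolding X_def using cycle_vec_Z by blast

lemma polytope_dim:
  assumes Ene: "E \<noteq> {}"
  shows "affdim (cycle_polytope V E s t) = int (card E) - int (card V)"
proof -
  have Vne: "V \<noteq> {}" using Ene st by blast
  obtain y where y: "y \<in> Z" "\<forall>e. y e \<ge> 0" "\<forall>e\<in>E. y e \<ge> 1" using pos_circ by blast
  have "\<exists>e\<in>E. y e > 0" using Ene y(3) by fastforce
  then obtain C0 where C0: "simple_cycle V E s t C0"
    using exists_cycle[OF Z_suppd[OF y(1)] y(2) Z_bd[OF y(1)]] by blast
  define x0 where "x0 = cycle_vec C0"
  have x0X: "x0 \<in> X" unfolding X_def x0_def using C0 by blast
  have x0Z: "x0 \<in> Z" "tot E x0 = 1" using X_props[OF x0X] by auto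
  have dimZ0: "dim Z0 + card V = card E" using dim_Z0[OF Vne x0Z] .
  have Pdef: "cycle_polytope V E s t = convex hull X" unfolding cycle_polytope_def X_def ..
  have Pne: "cycle_polytope V E s t \<noteq> {}" unfolding Pdef using x0X by auto
  have aff: "affine hull (cycle_polytope V E s t) = affine hull X" unfolding Pdef by simp
  define A1 where "A1 = {x \<in> Z. tot E x = 1}"
  have affA1: "affine A1"
    unfolding affine_def A1_def
  proof (intro ballI allI impI)
    fix x y u v assume x: "x \<in> {x \<in> Z. tot E x = 1}" and y: "y \<in> {x \<in> Z. tot E x = 1}" and uv: "u + v = (1::real)"
    have "u *\<^sub>R x + v *\<^sub>R y \<in> Z" using x y subspace_Z by (simp add: subspace_add subspace_scale)
    moreover have "tot E (u *\<^sub>R x + v *\<^sub>R y) = u * tot E x + v * tot E y"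
      using linear_tot[of E] by (simp add: linear_add linear_scale)
    ultimately show "u *\<^sub>R x + v *\<^sub>R y \<in> {x \<in> Z. tot E x = 1}" using x y uv by simp
  qed
  have XA1: "X \<subseteq> A1" unfolding A1_def using X_props by blast
  have hullA1: "affine hull X \<subseteq> A1" by (rule hull_minimal[of X A1 affine, OF XA1 affA1])
  have D: "{x - y | x y. x \<in> affine hull (cycle_polytope V E s t) \<and> y \<in> affine hull (cycle_polytope V E s t)} = Z0"
  proof
    show "{x - y | x y. x \<in> affine hull (cycle_polytope V E s t) \<and> y \<in> affine hull (cycle_polytope V E s t)} \<subseteq> Z0"
    proof
      fix d assume "d \<in> {x - y | x y. x \<in> affine hull (cycle_polytope V E s t) \<and> y \<in> affine hull (cycle_polytope V E s t)}"
      then obtain x y where d: "d = x - y" "x \<in> A1" "y \<in> A1" using aff hullA1 by blast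
      have "x - y \<in> Z" using d subspace_Z unfolding A1_def by (simp add: subspace_diff)
      moreover have "tot E (x - y) = tot E x - tot E y" using linear_tot[of E] by (simp add: linear_diff)
      ultimately show "d \<in> Z0" using d unfolding A1_def Z0_def by simp
    qed
    show "Z0 \<subseteq> {x - y | x y. x \<in> affine hull (cycle_polytope V E s t) \<and> y \<in> affine hull (cycle_polytope V E s t)}"
    proof
      fix z assume z: "z \<in> Z0"
      then have zZ: "z \<in> Z" and tz: "tot E z = 0" unfolding Z0_def by auto
      then have "z \<in> span X" using Z_span by blast
      then obtain u where u: "z = (\<Sum>v\<in>X. u v *\<^sub>R v)" using span_finite[OF finite_X] by auto
      have "tot E z = (\<Sum>v\<in>X. u v * tot E v)"
        unfolding u using linear_tot[of E] by (simp add: linear_sum linear_scale)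
      also have "\<dots> = (\<Sum>v\<in>X. u v)" using X_props by (intro sum.cong) auto
      finally have su: "(\<Sum>v\<in>X. u v) = 0" using tz by simp
      define u' where "u' v = u v + (if v = x0 then 1 else 0)" for v
      have "sum u' X = 1" unfolding u'_def using su x0X finite_X by (simp add: sum.distrib sum.delta')
      moreover have "(\<Sum>v\<in>X. u' v *\<^sub>R v) = z + x0"
      proof -
        have "(\<Sum>v\<in>X. u' v *\<^sub>R v) = (\<Sum>v\<in>X. u v *\<^sub>R v + (if v = x0 then x0 else 0))"
          by (rule sum.cong) (auto simp: u'_def scaleR_add_left)
        also have "\<dots> = (\<Sum>v\<in>X. u v *\<^sub>R v) + (\<Sum>v\<in>X. if v = x0 then x0 else 0)"
          by (rule sum.distrib)
        also have "(\<Sum>v\<in>X. if v = x0 then x0 else 0) = x0" using x0X finite_X by (simp add: sum.delta)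
        finally show ?thesis unfolding u .
      qed
      ultimately have "z + x0 \<in> affine hull X" unfolding affine_hull_finite[OF finite_X] by blast
      moreover have "x0 \<in> affine hull X" using x0X by (simp add: hull_inc)
      moreover have "z = (z + x0) - x0" by simp
      ultimately show "z \<in> {x - y | x y. x \<in> affine hull (cycle_polytope V E s t) \<and> y \<in> affine hull (cycle_polytope V E s t)}"
        unfolding aff by blast
    qed
  qed
  have "affdim (cycle_polytope V E s t) = int (dim Z0)" unfolding affdim_def D using Pne by simp
  then show ?thesis using dimZ0 by simp
qed

end

lemma finite_Av_n: "finite (Av_n n B)"
proof -
  have "Av_n n B \<subseteq> {xs. set xs \<subseteq> {1..n} \<and> length xs = n}"
    unfolding Av_n_def is_perm_def by auto
  then show ?thesis using finite_lists_length_eq[of "{1..n}" n] finite_subset by blast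
qed

lemma ov_st:
  assumes "e \<in> ov_E k B" "k \<ge> 1"
  shows "ov_src k e \<in> ov_V k B \<and> ov_tgt k e \<in> ov_V k B"
proof -
  have e: "is_perm e" "length e = k" "\<forall>\<pi>\<in>B. avoids e \<pi>" using assms(1) unfolding ov_E_def Av_n_def by auto
  have "pat {0..<k-1} e \<in> Av_n (card {0..<k-1}) B" by (rule pat_in_Av_n[OF e(1,3)]) (use e(2) in auto)
  moreover have "pat {1..<k} e \<in> Av_n (card {1..<k}) B" by (rule pat_in_Av_n[OF e(1,3)]) (use e(2) in auto)
  ultimately show ?thesis unfolding ov_src_def ov_tgt_def ov_V_def by simp
qed

lemma E_ne:
  assumes k: "k \<ge> 1" and ne: "Av B \<noteq> {}"
    and cl: "closed_under perm_dsum (Av B) \<or> closed_under perm_ssum (Av B)"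
  shows "ov_E k B \<noteq> {}"
proof -
  have one: "[1] \<in> Av B" using one_in_Av[OF ne] .
  obtain p where p: "p \<in> Av B" "length p = k"
    using cl idp_in[OF one _ k] decp_in[OF one _ k] length_idp length_decp by metis
  then have "p \<in> Av_n k B" unfolding Av_n_def using Av_iff by auto
  then show ?thesis unfolding ov_E_def by auto
qed

lemma part1:
  assumes k: "k \<ge> 1" and ne: "Av B \<noteq> {}"
    and cl: "closed_under perm_dsum (Av B) \<or> closed_under perm_ssum (Av B)"
  shows "strongly_connected (ov_V k B) (ov_E k B) (ov_src k) (ov_tgt k) \<and>
            affdim (cycle_polytope (ov_V k B) (ov_E k B) (ov_src k) (ov_tgt k))
              = int (card (Av_n k B)) - int (card (Av_n (k - 1) B))"
proof -
  have sc: "strongly_connected (ov_V k B) (ov_E k B) (ov_src k) (ov_tgt k)" using SC[OF k ne cl] .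
  interpret G: grph "ov_V k B" "ov_E k B" "ov_src k" "ov_tgt k"
    by unfold_locales (use finite_Av_n ov_st k sc in \<open>auto simp: ov_V_def ov_E_def\<close>)
  have "affdim (cycle_polytope (ov_V k B) (ov_E k B) (ov_src k) (ov_tgt k))
      = int (card (ov_E k B)) - int (card (ov_V k B))"
    by (rule G.polytope_dim[OF E_ne[OF k ne cl]])
  then show ?thesis using sc unfolding ov_E_def ov_V_def by simp
qed

theorem mainTheorem2:
  shows "(\<forall>(k::nat) B. k \<ge> 1 \<and> B \<subseteq> allPerms \<and> Av B \<noteq> {} \<and>
            (closed_under perm_dsum (Av B) \<or> closed_under perm_ssum (Av B)) \<longrightarrow>
            strongly_connected (ov_V k B) (ov_E k B) (ov_src k) (ov_tgt k) \<and>
            affdim (cycle_polytope (ov_V k B) (ov_E k B) (ov_src k) (ov_tgt k))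
              = int (card (Av_n k B)) - int (card (Av_n (k - 1) B)))
       \<and> (\<forall>(k::nat) \<tau>. k \<ge> 1 \<and> \<tau> \<in> allPerms \<and> length \<tau> \<ge> 2 \<longrightarrow>
            strongly_connected (ov_V k {\<tau>}) (ov_E k {\<tau>}) (ov_src k) (ov_tgt k) \<and>
            affdim (cycle_polytope (ov_V k {\<tau>}) (ov_E k {\<tau>}) (ov_src k) (ov_tgt k))
              = int (card (Av_n k {\<tau>})) - int (card (Av_n (k - 1) {\<tau>})))"
  using part1 single_ok by blast


end
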